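(* In any execution of the algorithm described in the context on a camera object $S$ and an associated versioned CAS object $O$: (1) before initTS is called on a VNode, $\mathit{VHead}$ has contained a pointer to that VNode; (2) after a complete execution of initTS on some VNode, that VNode's timestamp is valid.
   Context: Camera $S$ has an integer field timestamp, initially 0; takeSnapshot(): read $t:=S.\mathit{timestamp}$, perform CAS$(S.\mathit{timestamp},t,t+1)$, return $t$. A VNode has fields val and nextv (both immutable after creation) and ts (an integer or special value TBD, initially TBD). Versioned CAS object $O$ has a field $\mathit{VHead}$. Constructor with value $v$: $\mathit{VHead}:=$ new VNode(val $v$, nextv NULL); initTS($\mathit{VHead}$). initTS($n$): if $n.ts=$TBD, read $c:=S.\mathit{timestamp}$ and CAS$(n.ts,\mathrm{TBD},c)$. readSnapshot($ts$): $node:=\mathit{VHead}$; initTS($node$); while $node.ts>ts$, $node:=node.nextv$; return $node.val$. vRead(): $h:=\mathit{VHead}$; initTS($h$); return $h.val$. vCAS(oldV,newV): $h:=\mathit{VHead}$; initTS($h$); if $h.val\neq$ oldV return false; if newV $=$ oldV return true; $m:=$ new VNode(val newV, nextv $h$); if CAS$(\mathit{VHead},h,m)$ succeeds, initTS($m$) and return true; else delete $m$, call initTS on the current value of $\mathit{VHead}$, return false. A VNode's timestamp is valid in a configuration if its ts field is not TBD there, and invalid otherwise. *)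

theory Defs
  imports Main
begin

text \<open>Every shared-memory access (read/write/CAS of S.timestamp, VHead, a node's ts field)
  is one atomic step of one process; steps of different processes interleave arbitrarily.\<close>

type_synonym ptr = nat

datatype tsv = TBD | Stamp int

record 'v vnode =
  val   :: 'v
  nextv :: "ptr option"
  ts    :: tsv

text \<open>Continuation: what the caller does after initTS returns.\<close>
datatype 'v cont =
    KCtor
  | KSnap int
  | KRead
  | KCas 'v 'v
  | KDone

datatype 'v pc =
    Idle
  | CtorAlloc 'v
  | CtorCall
  | InitRead ptr "'v cont"
  | InitStamp ptr "'v cont"
  | InitCas ptr int "'v cont"
  | SnapHead int
  | SnapLoop ptr int
  | ReadHead
  | CasHead 'v 'v
  | CasCheck ptr 'v 'v
  | CasSwap ptr ptr
  | CasRetry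
  | TakeRead
  | TakeCas int

datatype ctor_state = CNone | CRunning | CDone

record ('p, 'v) conf =
  stamp :: int
  vhead :: "ptr option"               \<comment> \<open>O.VHead (None = not yet set)\<close>
  heap  :: "ptr \<Rightarrow> 'v vnode option"
  nxt   :: ptr                        \<comment> \<open>next fresh address (addresses never reused)\<close>
  ctor  :: ctor_state
  pc    :: "'p \<Rightarrow> 'v pc"

definition init_conf :: "('p, 'v) conf" where
  "init_conf = \<lparr>stamp = 0, vhead = None, heap = (\<lambda>_. None), nxt = 0, ctor = CNone,
                 pc = (\<lambda>_. Idle)\<rparr>"

fun resume :: "'v cont \<Rightarrow> ptr \<Rightarrow> 'v pc" where
  "resume KCtor n = Idle"
| "resume (KSnap t) n = SnapLoop n t"
| "resume KRead n = Idle"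
| "resume (KCas old new) n = CasCheck n old new"
| "resume KDone n = Idle"

definition finish :: "'p \<Rightarrow> 'v cont \<Rightarrow> ptr \<Rightarrow> ('p, 'v) conf \<Rightarrow> ('p, 'v) conf" where
  "finish p k n c = c\<lparr>pc := (pc c)(p := resume k n),
                       ctor := (if k = KCtor then CDone else ctor c)\<rparr>"

definition setpc :: "'p \<Rightarrow> 'v pc \<Rightarrow> ('p, 'v) conf \<Rightarrow> ('p, 'v) conf" where
  "setpc p q c = c\<lparr>pc := (pc c)(p := q)\<rparr>"

inductive pstep :: "'p \<Rightarrow> ('p, 'v) conf \<Rightarrow> ('p, 'v) conf \<Rightarrow> bool" where
  inv_ctor: "pc c p = Idle \<Longrightarrow> ctor c = CNone \<Longrightarrow>
     pstep p c ((setpc p (CtorAlloc v) c)\<lparr>ctor := CRunning\<rparr>)"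
| inv_snap: "pc c p = Idle \<Longrightarrow> ctor c = CDone \<Longrightarrow> pstep p c (setpc p (SnapHead t) c)"
| inv_read: "pc c p = Idle \<Longrightarrow> ctor c = CDone \<Longrightarrow> pstep p c (setpc p ReadHead c)"
| inv_cas:  "pc c p = Idle \<Longrightarrow> ctor c = CDone \<Longrightarrow> pstep p c (setpc p (CasHead old new) c)"
| inv_take: "pc c p = Idle \<Longrightarrow> pstep p c (setpc p TakeRead c)"
| ctor_alloc: "pc c p = CtorAlloc v \<Longrightarrow>
     pstep p c ((setpc p CtorCall c)\<lparr>heap := (heap c)(nxt c := Some \<lparr>val = v, nextv = None, ts = TBD\<rparr>),
                                     vhead := Some (nxt c), nxt := Suc (nxt c)\<rparr>)"
| ctor_call: "pc c p = CtorCall \<Longrightarrow> vhead c = Some h \<Longrightarrow> pstep p c (setpc p (InitRead h KCtor) c)"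
| init_tbd: "pc c p = InitRead n k \<Longrightarrow> heap c n = Some nd \<Longrightarrow> ts nd = TBD \<Longrightarrow>
     pstep p c (setpc p (InitStamp n k) c)"
| init_valid: "pc c p = InitRead n k \<Longrightarrow> heap c n = Some nd \<Longrightarrow> ts nd \<noteq> TBD \<Longrightarrow>
     pstep p c (finish p k n c)"
| init_stamp: "pc c p = InitStamp n k \<Longrightarrow> pstep p c (setpc p (InitCas n (stamp c) k) c)"
| init_cas: "pc c p = InitCas n s k \<Longrightarrow> heap c n = Some nd \<Longrightarrow>
     pstep p c ((finish p k n c)\<lparr>heap := (heap c)(n := Some (if ts nd = TBD then nd\<lparr>ts := Stamp s\<rparr> else nd))\<rparr>)"
| snap_head: "pc c p = SnapHead t \<Longrightarrow> vhead c = Some h \<Longrightarrow> pstep p c (setpc p (InitRead h (KSnap t)) c)"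
| snap_next: "pc c p = SnapLoop n t \<Longrightarrow> heap c n = Some nd \<Longrightarrow> ts nd = Stamp s \<Longrightarrow> s > t \<Longrightarrow>
     nextv nd = Some n' \<Longrightarrow> pstep p c (setpc p (SnapLoop n' t) c)"
| snap_ret: "pc c p = SnapLoop n t \<Longrightarrow> heap c n = Some nd \<Longrightarrow>
     \<not> (\<exists>s n'. ts nd = Stamp s \<and> s > t \<and> nextv nd = Some n') \<Longrightarrow> pstep p c (setpc p Idle c)"
| read_head: "pc c p = ReadHead \<Longrightarrow> vhead c = Some h \<Longrightarrow> pstep p c (setpc p (InitRead h KRead) c)"
| cas_head: "pc c p = CasHead old new \<Longrightarrow> vhead c = Some h \<Longrightarrow>
     pstep p c (setpc p (InitRead h (KCas old new)) c)"
| cas_neq: "pc c p = CasCheck h old new \<Longrightarrow> heap c h = Some nd \<Longrightarrow> val nd \<noteq> old \<Longrightarrow>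
     pstep p c (setpc p Idle c)"
| cas_same: "pc c p = CasCheck h old new \<Longrightarrow> heap c h = Some nd \<Longrightarrow> val nd = old \<Longrightarrow> new = old \<Longrightarrow>
     pstep p c (setpc p Idle c)"
| cas_alloc: "pc c p = CasCheck h old new \<Longrightarrow> heap c h = Some nd \<Longrightarrow> val nd = old \<Longrightarrow> new \<noteq> old \<Longrightarrow>
     pstep p c ((setpc p (CasSwap h (nxt c)) c)\<lparr>heap := (heap c)(nxt c := Some \<lparr>val = new, nextv = Some h, ts = TBD\<rparr>),
                                               nxt := Suc (nxt c)\<rparr>)"
| cas_succ: "pc c p = CasSwap h m \<Longrightarrow> vhead c = Some h \<Longrightarrow>
     pstep p c ((setpc p (InitRead m KDone) c)\<lparr>vhead := Some m\<rparr>)"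
| cas_fail: "pc c p = CasSwap h m \<Longrightarrow> vhead c \<noteq> Some h \<Longrightarrow>
     pstep p c ((setpc p CasRetry c)\<lparr>heap := (heap c)(m := None)\<rparr>)"
| cas_retry: "pc c p = CasRetry \<Longrightarrow> vhead c = Some h \<Longrightarrow> pstep p c (setpc p (InitRead h KDone) c)"
| take_read: "pc c p = TakeRead \<Longrightarrow> pstep p c (setpc p (TakeCas (stamp c)) c)"
| take_cas: "pc c p = TakeCas t \<Longrightarrow>
     pstep p c ((setpc p Idle c)\<lparr>stamp := (if stamp c = t then t + 1 else stamp c)\<rparr>)"

definition step :: "('p, 'v) conf \<Rightarrow> ('p, 'v) conf \<Rightarrow> bool" where
  "step c c' \<longleftrightarrow> (\<exists>p. pstep p c c')"

definition execution :: "(nat \<Rightarrow> ('p, 'v) conf) \<Rightarrow> nat \<Rightarrow> bool" where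
  "execution C N \<longleftrightarrow> C 0 = init_conf \<and> (\<forall>i < N. step (C i) (C (Suc i)))"

fun init_node :: "'v pc \<Rightarrow> ptr option" where
  "init_node (InitRead n k) = Some n"
| "init_node (InitStamp n k) = Some n"
| "init_node (InitCas n s k) = Some n"
| "init_node _ = None"

definition ts_valid :: "('p, 'v) conf \<Rightarrow> ptr \<Rightarrow> bool" where
  "ts_valid c n \<longleftrightarrow> (\<exists>nd. heap c n = Some nd \<and> ts nd \<noteq> TBD)"

end

theory Submission
  imports Defs
begin

definition invr :: "('p, 'v) conf \<Rightarrow> bool" where
  "invr c \<longleftrightarrow> (\<forall>k. nxt c \<le> k \<longrightarrow> heap c k = None)
     \<and> (\<forall>h. vhead c = Some h \<longrightarrow> h < nxt c)
     \<and> (\<forall>q n. init_node (pc c q) = Some n \<longrightarrow> n < nxt c)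
     \<and> (\<forall>p h m. pc c p = CasSwap h m \<longrightarrow> m < nxt c)
     \<and> (\<forall>p h m. pc c p = CasSwap h m \<longrightarrow> (\<exists>nd. heap c m = Some nd \<and> ts nd = TBD))
     \<and> (\<forall>p h m. pc c p = CasSwap h m \<longrightarrow> vhead c \<noteq> Some m)
     \<and> (\<forall>p h m q. pc c p = CasSwap h m \<longrightarrow> init_node (pc c q) \<noteq> Some m)
     \<and> (\<forall>p h m q h'. pc c p = CasSwap h m \<longrightarrow> pc c q = CasSwap h' m \<longrightarrow> q = p)"

lemma invr_other[simp]: "invr (c\<lparr>stamp := s\<rparr>) = invr c" "invr (c\<lparr>ctor := x\<rparr>) = invr c"
  by (simp_all add: invr_def)

lemma init_node_resume: "init_node (resume k n) = None"
  by (cases k) auto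

lemma resume_nc: "resume k n \<noteq> CasSwap h m"
  by (cases k) auto

lemma setpc_plain:
  assumes "invr c" "init_node q = None" "\<And>h m. q \<noteq> CasSwap h m"
  shows "invr (setpc p q c)"
  using assms unfolding invr_def setpc_def by simp

lemma setpc_init:
  assumes "invr c" "init_node q = Some n" "\<And>h m. q \<noteq> CasSwap h m" "n < nxt c"
    "\<And>p' h. p' \<noteq> p \<Longrightarrow> pc c p' \<noteq> CasSwap h n"
  shows "invr (setpc p q c)"
  using assms unfolding invr_def setpc_def by (simp, metis)

lemma setpc_vhead:
  assumes "invr c" "vhead c = Some h"
  shows "invr (setpc p (InitRead h k) c)"
  apply (rule setpc_init[OF assms(1), of _ h])
  using assms unfolding invr_def apply auto by blast

lemma setpc_same:
  assumes "invr c" "init_node (pc c p) = Some n" "init_node q = Some n" "\<And>h m. q \<noteq> CasSwap h m"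
  shows "invr (setpc p q c)"
  apply (rule setpc_init[OF assms(1) assms(3) assms(4)])
  using assms unfolding invr_def by auto

lemma finish_invr: "invr c \<Longrightarrow> invr (finish p k n c)"
  unfolding finish_def
  using setpc_plain[OF _ init_node_resume resume_nc, of c p k n]
  by (simp add: setpc_def)

lemma invr_step:
  assumes "pstep p c c'" "invr c"
  shows "invr c'"
  using assms
proof (induction rule: pstep.induct)
  case (ctor_alloc c p v)
  then show ?case unfolding invr_def setpc_def
    apply (simp add: less_Suc_eq)
    apply (elim conjE)
    apply (intro conjI allI impI)
    apply (auto split: if_splits)
    by (metis less_irrefl)
next
  case (init_cas c p n s k nd)
  then show ?case unfolding invr_def setpc_def finish_def
    apply (simp add: less_Suc_eq init_node_resume resume_nc)
    apply (elim conjE)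
    apply (intro conjI allI impI)
    apply (auto split: if_splits)
    by (metis init_node.simps(3))
next
  case (cas_alloc c p h old new nd)
  then show ?case unfolding invr_def setpc_def finish_def
    apply (simp add: less_Suc_eq init_node_resume resume_nc)
    apply (elim conjE)
    apply (intro conjI allI impI)
    apply (auto split: if_splits)
    by (metis less_irrefl)+
next
  case (cas_succ c p h m)
  then show ?case unfolding invr_def setpc_def finish_def
    apply (simp add: less_Suc_eq init_node_resume resume_nc)
    apply (elim conjE)
    apply (intro conjI allI impI)
    apply (auto split: if_splits)
    done
next
  case (cas_fail c p h m)
  then show ?case unfolding invr_def setpc_def finish_def
    apply (simp add: less_Suc_eq init_node_resume resume_nc)
    apply (elim conjE)
    apply (intro conjI allI impI)
    apply (auto split: if_splits)
    done
qed (auto intro: setpc_plain setpc_vhead finish_invr setpc_same)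

lemma invr_exec: "execution C N \<Longrightarrow> i \<le> N \<Longrightarrow> invr (C i)"
proof (induction i)
  case 0
  then show ?case by (simp add: execution_def invr_def init_conf_def)
next
  case (Suc i)
  then show ?case using invr_step unfolding execution_def step_def
    by (metis Suc_le_eq less_imp_le)
qed

lemma ts_pres:
  assumes "pstep q c c'" "invr c" "ts_valid c n"
  shows "ts_valid c' n"
  using assms
proof (induction rule: pstep.induct)
  case (ctor_alloc c p v)
  then show ?case unfolding invr_def ts_valid_def setpc_def by auto
next
  case (cas_alloc c p h old new nd)
  then show ?case unfolding invr_def ts_valid_def setpc_def by auto
next
  case (init_cas c p n s k nd)
  then show ?case unfolding ts_valid_def setpc_def finish_def by auto
next
  case (cas_fail c p h m)
  have "\<exists>nd. heap c m = Some nd \<and> ts nd = TBD" using cas_fail unfolding invr_def by blast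
  then have "m \<noteq> n" using cas_fail.prems(2) unfolding ts_valid_def by auto
  then show ?case using cas_fail.prems(2) unfolding ts_valid_def setpc_def by simp
qed (simp_all add: ts_valid_def setpc_def finish_def)

lemma pc_other:
  assumes "pstep q c c'" "p \<noteq> q"
  shows "pc c' p = pc c p"
  using assms by (induction rule: pstep.induct) (simp_all add: setpc_def finish_def)

lemma part1_self:
  assumes "pstep p c c'" "init_node (pc c p) \<noteq> Some n" "init_node (pc c' p) = Some n"
  shows "vhead c = Some n \<or> vhead c' = Some n"
  using assms by (induction rule: pstep.induct) (simp_all add: setpc_def finish_def init_node_resume)

lemma part2_self:
  assumes "pstep p c c'" "init_node (pc c p) = Some n" "init_node (pc c' p) \<noteq> Some n"
  shows "ts_valid c' n"
  using assms by (induction rule: pstep.induct) (simp_all add: setpc_def finish_def init_node_resume ts_valid_def)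

lemma part1_step:
  assumes "pstep q c c'" "init_node (pc c p) \<noteq> Some n" "init_node (pc c' p) = Some n"
  shows "vhead c = Some n \<or> vhead c' = Some n"
  using assms part1_self pc_other by metis

lemma part2_step:
  assumes "pstep q c c'" "init_node (pc c p) = Some n" "init_node (pc c' p) \<noteq> Some n"
  shows "ts_valid c' n"
  using assms part2_self pc_other by metis

theorem lemmaA2:
  fixes C :: "nat \<Rightarrow> ('p, 'v) conf" and N :: nat
  assumes "execution C N"
  shows "(\<forall>i p n. i < N \<and> init_node (pc (C i) p) \<noteq> Some n \<and> init_node (pc (C (Suc i)) p) = Some n
            \<longrightarrow> (\<exists>j \<le> Suc i. vhead (C j) = Some n))
       \<and> (\<forall>i p n. i < N \<and> init_node (pc (C i) p) = Some n \<and> init_node (pc (C (Suc i)) p) \<noteq> Some n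
            \<longrightarrow> (\<forall>k. Suc i \<le> k \<and> k \<le> N \<longrightarrow> ts_valid (C k) n))"
proof (intro conjI allI impI)
  have st: "\<And>i. i < N \<Longrightarrow> \<exists>q. pstep q (C i) (C (Suc i))"
    using assms unfolding execution_def step_def by blast
  fix i p n
  assume h: "i < N \<and> init_node (pc (C i) p) \<noteq> Some n \<and> init_node (pc (C (Suc i)) p) = Some n"
  from h have "i < N" by simp
  then obtain q where ps: "pstep q (C i) (C (Suc i))" using st by blast
  have "vhead (C i) = Some n \<or> vhead (C (Suc i)) = Some n"
    using part1_step[OF ps, of p n] h by blast
  then show "\<exists>j \<le> Suc i. vhead (C j) = Some n"
  proof
    assume "vhead (C i) = Some n" then show ?thesis by (intro exI[of _ i]) simp
  next
    assume "vhead (C (Suc i)) = Some n" then show ?thesis by (intro exI[of _ "Suc i"]) simp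
  qed
next
  have st: "\<And>i. i < N \<Longrightarrow> \<exists>q. pstep q (C i) (C (Suc i))"
    using assms unfolding execution_def step_def by blast
  fix i p n k
  assume h: "i < N \<and> init_node (pc (C i) p) = Some n \<and> init_node (pc (C (Suc i)) p) \<noteq> Some n"
    and hk: "Suc i \<le> k \<and> k \<le> N"
  from h have "i < N" by simp
  then obtain q where ps: "pstep q (C i) (C (Suc i))" using st by blast
  have base: "ts_valid (C (Suc i)) n" using part2_step[OF ps, of p n] h by blast
  have D: "\<And>d. Suc i + d \<le> N \<Longrightarrow> ts_valid (C (Suc i + d)) n"
  proof -
    fix d show "Suc i + d \<le> N \<Longrightarrow> ts_valid (C (Suc i + d)) n"
    proof (induction d)
      case 0 then show ?case using base by simp
    next
      case (Suc d)
      then have lt: "Suc i + d < N" by simp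
      then obtain q' where ps: "pstep q' (C (Suc i + d)) (C (Suc (Suc i + d)))" using st by blast
      have iv: "invr (C (Suc i + d))" using invr_exec[OF assms] lt by simp
      have tv: "ts_valid (C (Suc i + d)) n" using Suc.IH lt by simp
      have "ts_valid (C (Suc (Suc i + d))) n" by (rule ts_pres[OF ps iv tv])
      then show ?case by simp
    qed
  qed
  have "ts_valid (C (Suc i + (k - Suc i))) n" by (rule D) (use hk in simp)
  moreover have "Suc i + (k - Suc i) = k" using hk by simp
  ultimately show "ts_valid (C k) n" by simp
qed

end
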